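(* For every integer $n\ge2$, $B(n+2)\ge 2B(n)+1$.
   Context: Fix a field $\mathbb{F}$. All algebras are finite-dimensional, unital, not necessarily associative $\mathbb{F}$-algebras. For a finite generating set $S$ of an algebra $\mathcal{A}$, a word in $S$ is any product (with any bracketing) of finitely many elements of $S$; its length is the number of factors, and $1$ is a word of length $0$. $L_i(S)$ is the linear span of all words in $S$ of length at most $i$. The length of $S$ is $l(S)=\min\{k\ge0: L_k(S)=\mathcal{A}\}$, and $l(\mathcal{A})=\max\{l(S): S\text{ a finite generating set of }\mathcal{A}\}$. For a natural number $n\ge2$, $B(n)$ denotes the maximal integer $l>0$ such that for every $j\in\{1,\ldots,l\}$ there exists an algebra of dimension $n$ and length $j$. *)

theory Defs
  imports Main
begin

text \<open>An n-dimensional algebra over the field 'a is modelled (up to isomorphism) on the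
 coordinate space F^n, represented as functions nat => 'a vanishing at indices >= n,
 with a bilinear multiplication and a two-sided unit.\<close>

definition vecs :: "nat \<Rightarrow> (nat \<Rightarrow> 'a::field) set" where
  "vecs n = {v. \<forall>i\<ge>n. v i = 0}"

definition lin_span :: "(nat \<Rightarrow> 'a::field) set \<Rightarrow> (nat \<Rightarrow> 'a) set" where
  "lin_span X = {v. \<exists>T c. finite T \<and> T \<subseteq> X \<and> v = (\<lambda>k. \<Sum>t\<in>T. c t * t k)}"

definition is_algebra ::
  "nat \<Rightarrow> ((nat \<Rightarrow> 'a::field) \<Rightarrow> (nat \<Rightarrow> 'a) \<Rightarrow> (nat \<Rightarrow> 'a)) \<Rightarrow> (nat \<Rightarrow> 'a) \<Rightarrow> bool" where
  "is_algebra n m u \<longleftrightarrow>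
     u \<in> vecs n \<and>
     (\<forall>x\<in>vecs n. \<forall>y\<in>vecs n. m x y \<in> vecs n) \<and>
     (\<forall>x\<in>vecs n. \<forall>y\<in>vecs n. \<forall>z\<in>vecs n.
        m (\<lambda>k. x k + y k) z = (\<lambda>k. m x z k + m y z k) \<and>
        m z (\<lambda>k. x k + y k) = (\<lambda>k. m z x k + m z y k)) \<and>
     (\<forall>c. \<forall>x\<in>vecs n. \<forall>y\<in>vecs n.
        m (\<lambda>k. c * x k) y = (\<lambda>k. c * m x y k) \<and>
        m x (\<lambda>k. c * y k) = (\<lambda>k. c * m x y k)) \<and>
     (\<forall>x\<in>vecs n. m u x = x \<and> m x u = x)"

inductive is_word ::
  "((nat \<Rightarrow> 'a::field) \<Rightarrow> (nat \<Rightarrow> 'a) \<Rightarrow> (nat \<Rightarrow> 'a)) \<Rightarrow> (nat \<Rightarrow> 'a) \<Rightarrow> (nat \<Rightarrow> 'a) set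
     \<Rightarrow> (nat \<Rightarrow> 'a) \<Rightarrow> nat \<Rightarrow> bool"
  for m u S where
  word_unit: "is_word m u S u 0"
| word_gen: "s \<in> S \<Longrightarrow> is_word m u S s 1"
| word_mult: "is_word m u S a p \<Longrightarrow> is_word m u S b q \<Longrightarrow> 1 \<le> p \<Longrightarrow> 1 \<le> q
     \<Longrightarrow> is_word m u S (m a b) (p + q)"

definition Lspan where
  "Lspan m u S i = lin_span {w. \<exists>k\<le>i. is_word m u S w k}"

definition generates where
  "generates n m u S \<longleftrightarrow> finite S \<and> S \<subseteq> vecs n \<and> (\<exists>k. Lspan m u S k = vecs n)"

definition gen_length where
  "gen_length n m u S = (LEAST k. Lspan m u S k = vecs n)"

definition alg_has_length where
  "alg_has_length n m u l \<longleftrightarrow>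
     (\<exists>S. generates n m u S \<and> gen_length n m u S = l) \<and>
     (\<forall>S. generates n m u S \<longrightarrow> gen_length n m u S \<le> l)"

definition B :: "'a::field itself \<Rightarrow> nat \<Rightarrow> nat" where
  "B _ n = (GREATEST l. 0 < l \<and>
     (\<forall>j\<in>{1..l}. \<exists>(m :: (nat \<Rightarrow> 'a) \<Rightarrow> (nat \<Rightarrow> 'a) \<Rightarrow> (nat \<Rightarrow> 'a)) u.
        is_algebra n m u \<and> alg_has_length n m u j))"

end

theory Submission imports Defs Complex_Main "HOL-Library.Function_Algebras" begin

definition sc :: "'a::field \<Rightarrow> (nat \<Rightarrow> 'a) \<Rightarrow> (nat \<Rightarrow> 'a)" where
  "sc c v = (\<lambda>k. c * v k)"

interpretation fv: vector_space "sc :: 'a::field \<Rightarrow> (nat \<Rightarrow> 'a) \<Rightarrow> (nat \<Rightarrow> 'a)"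
  by unfold_locales (auto simp: sc_def fun_eq_iff algebra_simps)

lemma sum_fun_app: "(sum f A) k = (\<Sum>a\<in>A. f a k)" for f :: "'b \<Rightarrow> nat \<Rightarrow> 'c::comm_monoid_add"
  by (induct A rule: infinite_finite_induct) auto

lemma lin_span_eq: "lin_span X = fv.span X"
  unfolding lin_span_def fv.span_explicit
  by (auto simp: fun_eq_iff sum_fun_app sc_def)

lemma vecs_subspace: "fv.subspace (vecs n)"
  by (auto simp: fv.subspace_def vecs_def sc_def)

definition e :: "nat \<Rightarrow> nat \<Rightarrow> 'a::field" where
  "e i = (\<lambda>k. if k = i then 1 else 0)"

lemma vecs_decomp: "x \<in> vecs n \<Longrightarrow> x = (\<Sum>i<n. sc (x i) (e i))"
proof (rule ext)
  fix k assume "x \<in> vecs n"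
  then show "x k = (\<Sum>i<n. sc (x i) (e i)) k"
    by (cases "k < n") (auto simp: sum_fun_app sc_def e_def vecs_def if_distrib[of "(*) _"] cong: if_cong)
qed

lemma vecs_span: "(vecs n :: (nat \<Rightarrow> 'a::field) set) = fv.span (e ` {..<n})"
proof
  show "(vecs n :: (nat \<Rightarrow> 'a) set) \<subseteq> fv.span (e ` {..<n})"
  proof
    fix x :: "nat \<Rightarrow> 'a" assume "x \<in> vecs n"
    then have 1: "x = (\<Sum>i<n. sc (x i) (e i))" by (rule vecs_decomp)
    have "(\<Sum>i<n. sc (x i) (e i)) \<in> fv.span (e ` {..<n})"
      by (intro fv.span_sum fv.span_scale fv.span_base) auto
    then show "x \<in> fv.span (e ` {..<n})" using 1 by simp
  qed
  show "fv.span (e ` {..<n}) \<subseteq> (vecs n :: (nat \<Rightarrow> 'a) set)"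
    by (rule fv.span_minimal[OF _ vecs_subspace]) (auto simp: e_def vecs_def)
qed


lemma plus_lam: "(\<lambda>k. x k + y k) = x + y" by (simp add: fun_eq_iff)

locale alg =
  fixes n :: nat and m :: "(nat \<Rightarrow> 'a::field) \<Rightarrow> (nat \<Rightarrow> 'a) \<Rightarrow> (nat \<Rightarrow> 'a)" and u :: "nat \<Rightarrow> 'a"
  assumes isalg: "is_algebra n m u"
begin

lemma u_vecs: "u \<in> vecs n" using isalg by (simp add: is_algebra_def)
lemma m_vecs: "x \<in> vecs n \<Longrightarrow> y \<in> vecs n \<Longrightarrow> m x y \<in> vecs n"
  using isalg by (simp add: is_algebra_def)
lemma add_both: "\<forall>x\<in>vecs n. \<forall>y\<in>vecs n. \<forall>z\<in>vecs n.
        m (\<lambda>k. x k + y k) z = (\<lambda>k. m x z k + m y z k) \<and>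
        m z (\<lambda>k. x k + y k) = (\<lambda>k. m z x k + m z y k)"
  using isalg by (simp add: is_algebra_def)
lemma scale_both: "\<forall>c. \<forall>x\<in>vecs n. \<forall>y\<in>vecs n.
        m (\<lambda>k. c * x k) y = (\<lambda>k. c * m x y k) \<and>
        m x (\<lambda>k. c * y k) = (\<lambda>k. c * m x y k)"
  using isalg by (simp add: is_algebra_def)
lemma add_left: "x \<in> vecs n \<Longrightarrow> y \<in> vecs n \<Longrightarrow> z \<in> vecs n \<Longrightarrow> m (x + y) z = m x z + m y z"
  using add_both unfolding plus_fun_def by simp
lemma add_right: "x \<in> vecs n \<Longrightarrow> y \<in> vecs n \<Longrightarrow> z \<in> vecs n \<Longrightarrow> m z (x + y) = m z x + m z y"
  using add_both unfolding plus_fun_def by simp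
lemma scale_left: "x \<in> vecs n \<Longrightarrow> y \<in> vecs n \<Longrightarrow> m (sc c x) y = sc c (m x y)"
  using scale_both unfolding sc_def by simp
lemma scale_right: "x \<in> vecs n \<Longrightarrow> y \<in> vecs n \<Longrightarrow> m x (sc c y) = sc c (m x y)"
  using scale_both unfolding sc_def by simp
lemma unit_left: "x \<in> vecs n \<Longrightarrow> m u x = x" using isalg by (simp add: is_algebra_def)
lemma unit_right: "x \<in> vecs n \<Longrightarrow> m x u = x" using isalg by (simp add: is_algebra_def)

lemma zero_vecs: "0 \<in> vecs n" by (simp add: vecs_def)

lemma zero_left: "y \<in> vecs n \<Longrightarrow> m 0 y = 0"
proof -
  assume y: "y \<in> vecs n"
  have "m (sc 0 0) y = sc 0 (m 0 y)" by (rule scale_left[OF zero_vecs y])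
  then show ?thesis by (simp add: sc_def fun_eq_iff zero_fun_def)
qed

lemma zero_right: "y \<in> vecs n \<Longrightarrow> m y 0 = 0"
proof -
  assume y: "y \<in> vecs n"
  have "m y (sc 0 0) = sc 0 (m y 0)" by (rule scale_right[OF y zero_vecs])
  then show ?thesis by (simp add: sc_def fun_eq_iff zero_fun_def)
qed

lemma span_left:
  assumes a: "a \<in> fv.span X" and X: "X \<subseteq> vecs n" and b: "b \<in> vecs n"
    and Z: "fv.subspace Z" and XZ: "\<And>x. x \<in> X \<Longrightarrow> m x b \<in> Z"
  shows "m a b \<in> Z \<and> a \<in> vecs n"
  using a
proof (induct rule: fv.span_induct)
  case base
  show ?case
  proof (rule fv.subspaceI)
    show "0 \<in> {a. m a b \<in> Z \<and> a \<in> vecs n}"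
      using zero_left[OF b] fv.subspace_0[OF Z] zero_vecs by simp
  next
    fix x y assume "x \<in> {a. m a b \<in> Z \<and> a \<in> vecs n}" "y \<in> {a. m a b \<in> Z \<and> a \<in> vecs n}"
    then show "x + y \<in> {a. m a b \<in> Z \<and> a \<in> vecs n}"
      using add_left[OF _ _ b] fv.subspace_add[OF Z] fv.subspace_add[OF vecs_subspace] by auto
  next
    fix c x assume "x \<in> {a. m a b \<in> Z \<and> a \<in> vecs n}"
    then show "sc c x \<in> {a. m a b \<in> Z \<and> a \<in> vecs n}"
      using scale_left[OF _ b] fv.subspace_scale[OF Z] fv.subspace_scale[OF vecs_subspace] by auto
  qed
next
  case (step x) then show ?case using XZ X by auto
qed

lemma span_right:
  assumes a: "a \<in> fv.span X" and X: "X \<subseteq> vecs n" and b: "b \<in> vecs n"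
    and Z: "fv.subspace Z" and XZ: "\<And>x. x \<in> X \<Longrightarrow> m b x \<in> Z"
  shows "m b a \<in> Z \<and> a \<in> vecs n"
  using a
proof (induct rule: fv.span_induct)
  case base
  show ?case
  proof (rule fv.subspaceI)
    show "0 \<in> {a. m b a \<in> Z \<and> a \<in> vecs n}"
      using zero_right[OF b] fv.subspace_0[OF Z] zero_vecs by simp
  next
    fix x y assume "x \<in> {a. m b a \<in> Z \<and> a \<in> vecs n}" "y \<in> {a. m b a \<in> Z \<and> a \<in> vecs n}"
    then show "x + y \<in> {a. m b a \<in> Z \<and> a \<in> vecs n}"
      using add_right[OF _ _ b] fv.subspace_add[OF Z] fv.subspace_add[OF vecs_subspace] by auto
  next
    fix c x assume "x \<in> {a. m b a \<in> Z \<and> a \<in> vecs n}"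
    then show "sc c x \<in> {a. m b a \<in> Z \<and> a \<in> vecs n}"
      using scale_right[OF b] fv.subspace_scale[OF Z] fv.subspace_scale[OF vecs_subspace] by auto
  qed
next
  case (step x) then show ?case using XZ X by auto
qed

lemma span_both:
  assumes a: "a \<in> fv.span X" and X: "X \<subseteq> vecs n" and b: "b \<in> fv.span Y" and Y: "Y \<subseteq> vecs n"
    and Z: "fv.subspace Z" and XYZ: "\<And>x y. x \<in> X \<Longrightarrow> y \<in> Y \<Longrightarrow> m x y \<in> Z"
  shows "m a b \<in> Z"
proof -
  have bv: "b \<in> vecs n" using span_right[OF b Y u_vecs fv.subspace_UNIV] by simp
  show ?thesis
  proof (rule span_left[OF a X bv Z, THEN conjunct1])
    fix x assume x: "x \<in> X"
    then have xv: "x \<in> vecs n" using X by auto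
    show "m x b \<in> Z" using span_right[OF b Y xv Z] XYZ[OF x] by auto
  qed
qed

lemma word_vecs: "is_word m u S w k \<Longrightarrow> S \<subseteq> vecs n \<Longrightarrow> w \<in> vecs n"
  by (induct rule: is_word.induct) (auto simp: u_vecs m_vecs)

lemma word_0: assumes "is_word m u S w 0" shows "w = u"
  using assms by (rule is_word.cases) auto

lemma Lspan_eq: "Lspan m u S i = fv.span {w. \<exists>k\<le>i. is_word m u S w k}"
  by (simp add: Lspan_def lin_span_eq)

lemma Lspan_mono: "i \<le> j \<Longrightarrow> Lspan m u S i \<subseteq> Lspan m u S j"
  unfolding Lspan_eq by (rule fv.span_mono) (auto intro: le_trans)

lemma words_vecs: "S \<subseteq> vecs n \<Longrightarrow> {w. \<exists>k\<le>i. is_word m u S w k} \<subseteq> vecs n"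
  using word_vecs by blast

lemma Lspan_vecs: "S \<subseteq> vecs n \<Longrightarrow> Lspan m u S i \<subseteq> vecs n"
  unfolding Lspan_eq by (rule fv.span_minimal[OF words_vecs vecs_subspace])

lemma word_in_L: "is_word m u S w k \<Longrightarrow> k \<le> i \<Longrightarrow> w \<in> Lspan m u S i"
  unfolding Lspan_eq by (rule fv.span_base) auto

lemma Lspan_subspace: "fv.subspace (Lspan m u S i)"
  unfolding Lspan_eq by simp

lemma prod_L:
  assumes S: "S \<subseteq> vecs n" and a: "a \<in> Lspan m u S p" and b: "b \<in> Lspan m u S q"
  shows "m a b \<in> Lspan m u S (p + q)"
proof (rule span_both[OF a[unfolded Lspan_eq] words_vecs[OF S] b[unfolded Lspan_eq] words_vecs[OF S] Lspan_subspace])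
  fix x y assume x: "x \<in> {w. \<exists>k\<le>p. is_word m u S w k}" and y: "y \<in> {w. \<exists>k\<le>q. is_word m u S w k}"
  then obtain k k' where k: "k \<le> p" "is_word m u S x k" and k': "k' \<le> q" "is_word m u S y k'" by auto
  show "m x y \<in> Lspan m u S (p + q)"
  proof (cases "k = 0")
    case True
    then have "x = u" using k word_0 by blast
    then show ?thesis using unit_left[OF word_vecs[OF k'(2) S]] word_in_L[OF k'(2)] k' by auto
  next
    case False
    show ?thesis
    proof (cases "k' = 0")
      case True
      then have "y = u" using k' word_0 by blast
      then show ?thesis using unit_right[OF word_vecs[OF k(2) S]] word_in_L[OF k(2)] k by auto
    next
      case False
      then have "is_word m u S (m x y) (k + k')"
        using \<open>k \<noteq> 0\<close> k k' by (intro is_word.word_mult) auto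
      then show ?thesis by (rule word_in_L) (use k k' in auto)
    qed
  qed
qed


lemma decomp:
  assumes S: "S \<subseteq> vecs n" and i: "2 \<le> i" and ne: "Lspan m u S i \<noteq> Lspan m u S (i - 1)"
  shows "\<exists>p q. 1 \<le> p \<and> 1 \<le> q \<and> p + q = i \<and> Lspan m u S p \<noteq> Lspan m u S (p - 1)
            \<and> Lspan m u S q \<noteq> Lspan m u S (q - 1)"
proof -
  have "\<exists>w. is_word m u S w i \<and> w \<notin> Lspan m u S (i - 1)"
  proof (rule ccontr)
    assume "\<nexists>w. is_word m u S w i \<and> w \<notin> Lspan m u S (i - 1)"
    then have A: "\<And>w. is_word m u S w i \<Longrightarrow> w \<in> Lspan m u S (i - 1)" by blast
    have "Lspan m u S i \<subseteq> Lspan m u S (i - 1)"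
      unfolding Lspan_eq[of S i]
    proof (rule fv.span_minimal[OF _ Lspan_subspace], safe)
      fix w k assume "k \<le> i" "is_word m u S w k"
      then show "w \<in> Lspan m u S (i - 1)"
        using A word_in_L[of S w k "i - 1"] by (cases "k = i") auto
    qed
    then show False using ne Lspan_mono[of "i - 1" i S] by auto
  qed
  then obtain w where w: "is_word m u S w i" "w \<notin> Lspan m u S (i - 1)" by blast
  from w(1) obtain a b p q where ab: "w = m a b" "is_word m u S a p" "is_word m u S b q" "1 \<le> p" "1 \<le> q" "p + q = i"
    by (rule is_word.cases) (use i in auto)
  have "Lspan m u S p \<noteq> Lspan m u S (p - 1)"
  proof
    assume eq: "Lspan m u S p = Lspan m u S (p - 1)"
    have "a \<in> Lspan m u S (p - 1)" using eq word_in_L[OF ab(2)] by auto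
    moreover have "b \<in> Lspan m u S q" by (rule word_in_L[OF ab(3)]) simp
    ultimately have "m a b \<in> Lspan m u S (p - 1 + q)" by (rule prod_L[OF S])
    then show False using w ab by auto
  qed
  moreover have "Lspan m u S q \<noteq> Lspan m u S (q - 1)"
  proof
    assume eq: "Lspan m u S q = Lspan m u S (q - 1)"
    have "b \<in> Lspan m u S (q - 1)" using eq word_in_L[OF ab(3)] by auto
    moreover have "a \<in> Lspan m u S p" by (rule word_in_L[OF ab(2)]) simp
    ultimately have "m a b \<in> Lspan m u S (p + (q - 1))" using prod_L[OF S] by blast
    then show False using w ab by (auto simp: add.commute)
  qed
  ultimately show ?thesis using ab by blast
qed

end

definition AC :: "nat \<Rightarrow> nat \<Rightarrow> bool" where
  "AC n j \<longleftrightarrow> (\<exists>D. finite D \<and> 1 \<in> D \<and> j \<in> D \<and> (\<forall>i\<in>D. 1 \<le> i \<and> i \<le> j) \<and> card D + 1 \<le> n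
      \<and> (\<forall>i\<in>D. 1 < i \<longrightarrow> (\<exists>p\<in>D. \<exists>q\<in>D. p + q = i)))"

context alg
begin

lemma length_AC:
  assumes gen: "generates n m u S" and len: "gen_length n m u S = j" and j: "1 \<le> j"
  shows "AC n j"
proof -
  define L where "L = Lspan m u S"
  have S: "S \<subseteq> vecs n" and fin: "finite S" and ex: "\<exists>k. L k = vecs n"
    using gen by (auto simp: generates_def L_def)
  have Lj: "L j = vecs n" using LeastI_ex[OF ex] len by (simp add: gen_length_def L_def)
  have notL: "\<And>k. k < j \<Longrightarrow> L k \<noteq> vecs n"
    using not_less_Least len by (auto simp: gen_length_def L_def)
  define D where "D = {i \<in> {1..j}. L i \<noteq> L (i - 1)}"
  have finD: "finite D" by (simp add: D_def)
  have jD: "j \<in> D" using j notL[of "j - 1"] Lj by (auto simp: D_def)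
  have Drange: "\<forall>i\<in>D. 1 \<le> i \<and> i \<le> j" by (auto simp: D_def)
  have clos: "\<forall>i\<in>D. 1 < i \<longrightarrow> (\<exists>p\<in>D. \<exists>q\<in>D. p + q = i)"
  proof (intro ballI impI)
    fix i assume iD: "i \<in> D" and i1: "1 < i"
    then obtain p q where pq: "1 \<le> p" "1 \<le> q" "p + q = i" "L p \<noteq> L (p - 1)" "L q \<noteq> L (q - 1)"
      using decomp[OF S, of i] by (auto simp: D_def L_def)
    then have "p \<in> D" "q \<in> D" using iD by (auto simp: D_def)
    then show "\<exists>p\<in>D. \<exists>q\<in>D. p + q = i" using pq by blast
  qed
  have oneD: "1 \<in> D"
  proof (rule ccontr)
    assume n1: "1 \<notin> D"
    have "D \<noteq> {}" using jD by auto
    define i0 where "i0 = Min D"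
    have i0D: "i0 \<in> D" using finD \<open>D \<noteq> {}\<close> by (simp add: i0_def)
    then have "1 < i0" using n1 Drange by (metis le_neq_implies_less)
    then obtain p q where "p \<in> D" "q \<in> D" "p + q = i0" using clos i0D by blast
    moreover have "1 \<le> q" using Drange \<open>q \<in> D\<close> by auto
    ultimately have "p < i0" "p \<in> D" by auto
    then show False using Min_le[OF finD, of p] by (simp add: i0_def)
  qed
  have u0: "u \<noteq> 0"
  proof
    assume "u = 0"
    have "\<And>x::nat\<Rightarrow>'a. x \<in> vecs n \<Longrightarrow> x = 0"
    proof -
      fix x :: "nat \<Rightarrow> 'a" assume x: "x \<in> vecs n"
      have "x = m u x" using unit_left[OF x] by simp
      also have "\<dots> = 0" using zero_left[OF x] \<open>u = 0\<close> by simp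
      finally show "x = 0" .
    qed
    then have "vecs n \<subseteq> L 0"
      using fv.span_zero by (auto simp: L_def Lspan_eq)
    then have "L 0 = vecs n" using Lspan_vecs[OF S] by (auto simp: L_def)
    then show False using notL j by auto
  qed
  have main: "\<And>i. i \<le> j \<Longrightarrow> \<exists>B. B \<subseteq> L i \<and> fv.independent B \<and> finite B \<and> card B = 1 + card {k\<in>D. k \<le> i}"
  proof -
    fix i show "i \<le> j \<Longrightarrow> \<exists>B. B \<subseteq> L i \<and> fv.independent B \<and> finite B \<and> card B = 1 + card {k\<in>D. k \<le> i}"
    proof (induct i)
      case 0
      have "{k\<in>D. k \<le> 0} = {}" using Drange by auto
      moreover have "u \<in> L 0" using word_in_L[OF is_word.word_unit] by (simp add: L_def)
      ultimately show ?case using u0 by (intro exI[of _ "{u}"]) auto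
    next
      case (Suc i)
      then obtain B where B: "B \<subseteq> L i" "fv.independent B" "finite B" "card B = 1 + card {k\<in>D. k \<le> i}"
        by auto
      have BL: "B \<subseteq> L (Suc i)" using B(1) Lspan_mono[of i "Suc i" S] by (auto simp: L_def)
      show ?case
      proof (cases "Suc i \<in> D")
        case False
        then have "{k\<in>D. k \<le> Suc i} = {k\<in>D. k \<le> i}" by (auto simp: le_Suc_eq)
        then show ?thesis using B BL by auto
      next
        case True
        then have ne: "L (Suc i) \<noteq> L i" by (simp add: D_def)
        have "L i \<subseteq> L (Suc i)" using Lspan_mono[of i "Suc i" S] by (auto simp: L_def)
        then obtain w where w: "w \<in> L (Suc i)" "w \<notin> L i" using ne by blast
        have spB: "fv.span B \<subseteq> L i"
          using fv.span_minimal[OF B(1)] Lspan_subspace by (auto simp: L_def)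
        then have wB: "w \<notin> fv.span B" using w by auto
        then have "w \<notin> B" using fv.span_base by blast
        have "{k\<in>D. k \<le> Suc i} = insert (Suc i) {k\<in>D. k \<le> i}" using True by (auto simp: le_Suc_eq)
        moreover have "finite {k\<in>D. k \<le> i}" using finD by auto
        ultimately have "card {k\<in>D. k \<le> Suc i} = Suc (card {k\<in>D. k \<le> i})" by simp
        moreover have "fv.independent (insert w B)" using fv.independent_insertI[OF wB B(2)] .
        ultimately show ?thesis using B BL w wB \<open>w \<notin> B\<close>
          by (intro exI[of _ "insert w B"]) auto
      qed
    qed
  qed
  obtain B where B: "B \<subseteq> L j" "fv.independent B" "finite B" "card B = 1 + card {k\<in>D. k \<le> j}"
    using main[of j] by auto
  have "{k\<in>D. k \<le> j} = D" using Drange by auto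
  have "B \<subseteq> fv.span (e ` {..<n})" using B(1) Lj vecs_span by auto
  note X = fv.independent_span_bound[OF finite_imageI[OF finite_lessThan] B(2) this]
  then have "card B \<le> card (e ` {..<n} :: (nat \<Rightarrow> 'a) set)" by simp
  also have "\<dots> \<le> n" using card_image_le[of "{..<n}" e] by simp
  finally have "card D + 1 \<le> n" using B(4) \<open>{k\<in>D. k \<le> j} = D\<close> by simp
  then show ?thesis unfolding AC_def using finD oneD jD Drange clos by blast
qed

end

lemma chain_bound:
  fixes D :: "nat set"
  assumes fin: "finite D" and one: "1 \<in> D" and pos: "\<forall>i\<in>D. 1 \<le> i"
    and clos: "\<forall>i\<in>D. 1 < i \<longrightarrow> (\<exists>p\<in>D. \<exists>q\<in>D. p + q = i)"
  shows "i \<in> D \<Longrightarrow> 2 * i \<le> 2 ^ card {x\<in>D. x \<le> i}"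
proof (induct i rule: less_induct)
  case (less i)
  show ?case
  proof (cases "i = 1")
    case True
    have "1 \<in> {x\<in>D. x \<le> i}" using one True by auto
    then have "card {x\<in>D. x \<le> i} \<noteq> 0" using fin by (subst card_0_eq) auto
    then have "1 \<le> card {x\<in>D. x \<le> i}" by linarith
    then have "2 ^ 1 \<le> (2::nat) ^ card {x\<in>D. x \<le> i}"
      by (rule power_increasing) auto
    then show ?thesis using True by simp
  next
    case False
    then have "1 < i" using pos less.prems by force
    then obtain p q where pq: "p \<in> D" "q \<in> D" "p + q = i" using clos less.prems by blast
    define r where "r = max p q"
    have rD: "r \<in> D" using pq by (simp add: r_def max_def)
    have "1 \<le> p" "1 \<le> q" using pos pq by auto
    then have ri: "r < i" using pq by (auto simp: r_def max_def)
    have IH: "2 * r \<le> 2 ^ card {x\<in>D. x \<le> r}" using less.hyps[OF ri rD] .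
    have "i \<in> {x\<in>D. x \<le> i}" "i \<notin> {x\<in>D. x \<le> r}" using ri less.prems by auto
    moreover have "{x\<in>D. x \<le> r} \<subseteq> {x\<in>D. x \<le> i}" using ri by auto
    ultimately have "{x\<in>D. x \<le> r} \<subset> {x\<in>D. x \<le> i}" by blast
    then have "card {x\<in>D. x \<le> r} < card {x\<in>D. x \<le> i}"
      by (rule psubset_card_mono[rotated]) (use fin in auto)
    then have "2 * (2::nat) ^ card {x\<in>D. x \<le> r} \<le> 2 ^ card {x\<in>D. x \<le> i}"
      by (metis Suc_le_eq power_Suc power_increasing one_le_numeral)
    moreover have "2 * i \<le> 2 * (2 * r)" using pq by (auto simp: r_def max_def)
    ultimately show ?thesis using IH by linarith
  qed
qed

lemma AC_bound: assumes "AC n j" shows "j \<le> 2 ^ n"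
proof -
  obtain D where D: "finite D" "1 \<in> D" "j \<in> D" "\<forall>i\<in>D. 1 \<le> i \<and> i \<le> j" "card D + 1 \<le> n"
    "\<forall>i\<in>D. 1 < i \<longrightarrow> (\<exists>p\<in>D. \<exists>q\<in>D. p + q = i)"
    using assms unfolding AC_def by blast
  have "2 * j \<le> 2 ^ card {x\<in>D. x \<le> j}"
    by (rule chain_bound[OF D(1) D(2) _ D(6) D(3)]) (use D(4) in auto)
  also have "{x\<in>D. x \<le> j} = D" using D(4) by auto
  also have "(2::nat) ^ card D \<le> 2 ^ n" using D(5) by (intro power_increasing) auto
  finally show ?thesis by simp
qed

lemma AC_one: "2 \<le> n \<Longrightarrow> AC n 1"
  unfolding AC_def by (intro exI[of _ "{1}"]) auto

lemma AC_ext: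
  assumes "AC n k" "1 \<le> k"
  shows "AC (n + 2) (2 * k)" "AC (n + 2) (2 * k + 1)"
proof -
  obtain D where D: "finite D" "1 \<in> D" "k \<in> D" "\<forall>i\<in>D. 1 \<le> i \<and> i \<le> k" "card D + 1 \<le> n"
    "\<forall>i\<in>D. 1 < i \<longrightarrow> (\<exists>p\<in>D. \<exists>q\<in>D. p + q = i)"
    using assms unfolding AC_def by blast
  have n1: "2 * k \<notin> D" using D(4) assms(2) by fastforce
  have n2: "2 * k + 1 \<notin> D" using D(4) assms(2) by fastforce
  show "AC (n + 2) (2 * k)"
    unfolding AC_def
  proof (intro exI[of _ "insert (2 * k) D"] conjI)
    show "card (insert (2 * k) D) + 1 \<le> n + 2" using D(1,5) n1 by simp
    show "\<forall>i\<in>insert (2 * k) D. 1 < i \<longrightarrow> (\<exists>p\<in>insert (2 * k) D. \<exists>q\<in>insert (2 * k) D. p + q = i)"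
    proof (intro ballI impI)
      fix i assume i: "i \<in> insert (2 * k) D" "1 < i"
      show "\<exists>p\<in>insert (2 * k) D. \<exists>q\<in>insert (2 * k) D. p + q = i"
      proof (cases "i = 2 * k")
        case True then show ?thesis using D(3) by (intro bexI[of _ k] bexI[of _ k]) auto
      next
        case False
        then have "i \<in> D" using i by auto
        then show ?thesis using D(6) i(2) by blast
      qed
    qed
    show "finite (insert (2 * k) D)" using D(1) by simp
    show "1 \<in> insert (2 * k) D" using D(2) by simp
    show "2 * k \<in> insert (2 * k) D" by simp
    show "\<forall>i\<in>insert (2 * k) D. 1 \<le> i \<and> i \<le> 2 * k" using D(4) assms(2) by auto
  qed
  show "AC (n + 2) (2 * k + 1)"
    unfolding AC_def
  proof (intro exI[of _ "insert (2 * k + 1) (insert (2 * k) D)"] conjI)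
    show "card (insert (2 * k + 1) (insert (2 * k) D)) + 1 \<le> n + 2" using D(1,5) n1 n2 by simp
    show "\<forall>i\<in>insert (2 * k + 1) (insert (2 * k) D). 1 < i \<longrightarrow>
      (\<exists>p\<in>insert (2 * k + 1) (insert (2 * k) D). \<exists>q\<in>insert (2 * k + 1) (insert (2 * k) D). p + q = i)"
    proof (intro ballI impI)
      fix i assume i: "i \<in> insert (2 * k + 1) (insert (2 * k) D)" "1 < i"
      show "\<exists>p\<in>insert (2 * k + 1) (insert (2 * k) D). \<exists>q\<in>insert (2 * k + 1) (insert (2 * k) D). p + q = i"
      proof (cases "i = 2 * k + 1")
        case True then show ?thesis using D(2) by (intro bexI[of _ "2 * k"] bexI[of _ 1]) auto
      next
        case False
        show ?thesis
        proof (cases "i = 2 * k")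
          case True then show ?thesis using D(3) by (intro bexI[of _ k] bexI[of _ k]) auto
        next
          case False
          then have "i \<in> D" using i \<open>i \<noteq> 2 * k + 1\<close> by auto
          then show ?thesis using D(6) i(2) by blast
        qed
      qed
    qed
    show "finite (insert (2 * k + 1) (insert (2 * k) D))" using D(1) by simp
    show "1 \<in> insert (2 * k + 1) (insert (2 * k) D)" using D(2) by simp
    show "2 * k + 1 \<in> insert (2 * k + 1) (insert (2 * k) D)" by simp
    show "\<forall>i\<in>insert (2 * k + 1) (insert (2 * k) D). 1 \<le> i \<and> i \<le> 2 * k + 1" using D(4) assms(2) by auto
  qed
qed

lemma sum_single: "(i::nat) < n \<Longrightarrow> (\<And>a. a < n \<Longrightarrow> a \<noteq> i \<Longrightarrow> g a = 0) \<Longrightarrow> (\<Sum>a<n. g a) = g i"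
  by (subst sum.remove[OF finite_lessThan, of i]) (auto intro!: sum.neutral)

definition mm :: "nat \<Rightarrow> (nat \<Rightarrow> nat \<Rightarrow> nat) \<Rightarrow> (nat \<Rightarrow> 'a::field) \<Rightarrow> (nat \<Rightarrow> 'a) \<Rightarrow> (nat \<Rightarrow> 'a)" where
  "mm n tab x y = (\<lambda>k. if k < n then (\<Sum>a<n. \<Sum>b<n. of_bool (tab a b = k) * (x a * y b)) else 0)"

lemma mm_alg:
  assumes n0: "0 < n" and t0: "\<And>b. b < n \<Longrightarrow> tab 0 b = b" and t1: "\<And>a. a < n \<Longrightarrow> tab a 0 = a"
  shows "is_algebra n (mm n tab :: (nat \<Rightarrow> 'a::field) \<Rightarrow> _) (e 0)"
  unfolding is_algebra_def
proof (intro conjI ballI allI)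
  show "(e 0 :: nat \<Rightarrow> 'a) \<in> vecs n" using n0 by (auto simp: e_def vecs_def)
  fix x y :: "nat \<Rightarrow> 'a"
  show "mm n tab x y \<in> vecs n" by (auto simp: mm_def vecs_def)
  fix z :: "nat \<Rightarrow> 'a"
  show "mm n tab (\<lambda>k. x k + y k) z = (\<lambda>k. mm n tab x z k + mm n tab y z k)"
    by (auto simp: mm_def fun_eq_iff distrib_right distrib_left sum.distrib)
  show "mm n tab z (\<lambda>k. x k + y k) = (\<lambda>k. mm n tab z x k + mm n tab z y k)"
    by (auto simp: mm_def fun_eq_iff distrib_right distrib_left sum.distrib)
next
  fix c :: 'a and x y :: "nat \<Rightarrow> 'a"
  show "mm n tab (\<lambda>k. c * x k) y = (\<lambda>k. c * mm n tab x y k)"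
    by (auto simp: mm_def fun_eq_iff sum_distrib_left ac_simps)
  show "mm n tab x (\<lambda>k. c * y k) = (\<lambda>k. c * mm n tab x y k)"
    by (auto simp: mm_def fun_eq_iff sum_distrib_left ac_simps)
next
  fix x :: "nat \<Rightarrow> 'a" assume x: "x \<in> vecs n"
  show "mm n tab (e 0) x = x"
  proof (rule ext)
    fix k show "mm n tab (e 0) x k = x k"
    proof (cases "k < n")
      case True
      have "(\<Sum>a<n. \<Sum>b<n. of_bool (tab a b = k) * (e 0 a * x b)) = (\<Sum>b<n. of_bool (tab 0 b = k) * (e 0 0 * x b))"
        by (rule sum_single[OF n0]) (auto simp: e_def)
      also have "\<dots> = (\<Sum>b<n. of_bool (b = k) * x b)" by (intro sum.cong) (auto simp: e_def t0)
      also have "\<dots> = of_bool (k = k) * x k" by (rule sum_single[OF True]) auto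
      finally show ?thesis using True by (simp add: mm_def)
    next
      case False then show ?thesis using x by (simp add: mm_def vecs_def)
    qed
  qed
  show "mm n tab x (e 0) = x"
  proof (rule ext)
    fix k show "mm n tab x (e 0) k = x k"
    proof (cases "k < n")
      case True
      have "(\<Sum>a<n. \<Sum>b<n. of_bool (tab a b = k) * (x a * e 0 b)) = (\<Sum>a<n. of_bool (tab a 0 = k) * (x a * e 0 0))"
        by (intro sum.cong refl sum_single[OF n0]) (auto simp: e_def)
      also have "\<dots> = (\<Sum>a<n. of_bool (a = k) * x a)" by (intro sum.cong) (auto simp: e_def t1)
      also have "\<dots> = of_bool (k = k) * x k" by (rule sum_single[OF True]) auto
      finally show ?thesis using True by (simp add: mm_def)
    next
      case False then show ?thesis using x by (simp add: mm_def vecs_def)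
    qed
  qed
qed

lemma mm_basis:
  assumes "a < n" "b < n"
  shows "mm n tab (e a) (e b) = (if tab a b < n then e (tab a b) else (0 :: nat \<Rightarrow> 'a::field))"
proof (rule ext)
  fix k
  show "mm n tab (e a) (e b) k = (if tab a b < n then e (tab a b) else (0 :: nat \<Rightarrow> 'a)) k"
  proof (cases "k < n")
    case True
    have "(\<Sum>a'<n. \<Sum>b'<n. of_bool (tab a' b' = k) * (e a a' * e b b')) = (\<Sum>b'<n. of_bool (tab a b' = k) * (e a a * (e b b' :: 'a)))"
      by (rule sum_single[OF assms(1)]) (auto simp: e_def)
    also have "\<dots> = of_bool (tab a b = k) * (e a a * e b b)"
      by (rule sum_single[OF assms(2)]) (auto simp: e_def)
    finally show ?thesis using True by (auto simp: mm_def e_def)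
  next
    case False then show ?thesis by (auto simp: mm_def e_def)
  qed
qed

definition G :: "nat \<Rightarrow> (nat \<Rightarrow> nat) \<Rightarrow> nat \<Rightarrow> (nat \<Rightarrow> 'a::field) set" where
  "G n f d = {x \<in> vecs n. \<forall>i<n. f i < d \<longrightarrow> x i = 0}"

lemma G_subspace: "fv.subspace (G n f d)"
  by (auto simp: fv.subspace_def G_def vecs_def sc_def)

lemma G_mono: "d \<le> d' \<Longrightarrow> G n f d' \<subseteq> G n f d"
  by (auto simp: G_def)

lemma mm_G:
  assumes fadd: "\<And>a b. a < n \<Longrightarrow> b < n \<Longrightarrow> tab a b < n \<Longrightarrow> f (tab a b) = f a + f b"
    and x: "x \<in> G n f p" and y: "y \<in> G n f q"
  shows "mm n tab x y \<in> G n f (p + q)"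
  unfolding G_def
proof (intro CollectI conjI allI impI)
  show "mm n tab x y \<in> vecs n" by (auto simp: mm_def vecs_def)
  fix k assume k: "k < n" "f k < p + q"
  have "(\<Sum>a<n. \<Sum>b<n. of_bool (tab a b = k) * (x a * y b)) = 0"
  proof (intro sum.neutral ballI)
    fix a b assume a: "a \<in> {..<n}" and b: "b \<in> {..<n}"
    show "of_bool (tab a b = k) * (x a * y b) = 0"
    proof (cases "tab a b = k")
      case True
      then have "f a + f b < p + q" using fadd[of a b] a b k by auto
      then have "f a < p \<or> f b < q" by linarith
      then show ?thesis using x y a b by (auto simp: G_def)
    qed simp
  qed
  then show "mm n tab x y k = 0" using k by (simp add: mm_def)
qed

lemma mm_zero_l: "mm n tab 0 y = 0" by (simp add: mm_def fun_eq_iff)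
lemma mm_zero_r: "mm n tab x 0 = 0" by (simp add: mm_def fun_eq_iff)

lemma e_vecs: "c < n \<Longrightarrow> e c \<in> vecs n" by (auto simp: e_def vecs_def)

locale gr =
  fixes n :: nat and tab :: "nat \<Rightarrow> nat \<Rightarrow> nat" and f :: "nat \<Rightarrow> nat" and j :: nat
  assumes n0: "0 < n" and j1: "1 \<le> j"
  and t0: "\<And>b. b < n \<Longrightarrow> tab 0 b = b" and t1: "\<And>a. a < n \<Longrightarrow> tab a 0 = a"
  and f0: "f 0 = 0" and fpos: "\<And>i. 0 < i \<Longrightarrow> i < n \<Longrightarrow> 1 \<le> f i \<and> f i \<le> j"
  and fadd: "\<And>a b. a < n \<Longrightarrow> b < n \<Longrightarrow> tab a b < n \<Longrightarrow> f (tab a b) = f a + f b"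
  and spl: "\<And>c. 0 < c \<Longrightarrow> c < n \<Longrightarrow> 2 \<le> f c \<Longrightarrow> \<exists>a<n. \<exists>b<n. tab a b = c \<and> 1 \<le> f a \<and> 1 \<le> f b"
  and top: "\<exists>c<n. f c = j"
begin

lemma isalg: "alg n (mm n tab :: (nat \<Rightarrow> 'a::field) \<Rightarrow> _) (e 0)"
  by (rule alg.intro, rule mm_alg[OF n0 t0 t1])

lemma S0_words:
  "is_word (mm n tab) (e 0) (e ` {c. 0 < c \<and> c < n \<and> f c = 1}) w L \<Longrightarrow>
     w = (0 :: nat \<Rightarrow> 'a::field) \<or> (\<exists>c<n. f c = L \<and> w = e c)"
proof (induct rule: is_word.induct)
  case word_unit then show ?case using n0 f0 by auto
next
  case (word_gen s) then show ?case by auto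
next
  case (word_mult a p b q)
  show ?case
  proof (cases "a = 0 \<or> b = 0")
    case True then show ?thesis by (auto simp: mm_zero_l mm_zero_r)
  next
    case False
    then obtain c c' where c: "c < n" "f c = p" "a = e c" and c': "c' < n" "f c' = q" "b = e c'"
      using word_mult by auto
    show ?thesis
      using mm_basis[OF c(1) c'(1), of tab] fadd[OF c(1) c'(1)] c c' by (cases "tab c c' < n") auto
  qed
qed

lemma basis_words:
  "c < n \<Longrightarrow> is_word (mm n tab) (e 0) (e ` {c. 0 < c \<and> c < n \<and> f c = 1}) (e c :: nat \<Rightarrow> 'a::field) (f c)"
proof (induct "f c" arbitrary: c rule: less_induct)
  case less
  show ?case
  proof (cases "c = 0")
    case True then show ?thesis using f0 by (simp add: is_word.word_unit)
  next
    case False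
    then have fc: "1 \<le> f c" using fpos less.prems by auto
    show ?thesis
    proof (cases "f c = 1")
      case True
      have "e c \<in> e ` {c. 0 < c \<and> c < n \<and> f c = 1}" using True \<open>c \<noteq> 0\<close> less.prems by auto
      from is_word.word_gen[OF this] show ?thesis using True by simp
    next
      case False
      then have "2 \<le> f c" using fc by auto
      then obtain a b where ab: "a < n" "b < n" "tab a b = c" "1 \<le> f a" "1 \<le> f b"
        using spl[of c] \<open>c \<noteq> 0\<close> less.prems by auto
      have fab: "f c = f a + f b" using fadd[OF ab(1,2)] ab(3) less.prems by auto
      have "is_word (mm n tab) (e 0) (e ` {c. 0 < c \<and> c < n \<and> f c = 1}) (mm n tab (e a) (e b) :: nat \<Rightarrow> 'a) (f a + f b)"
        by (rule is_word.word_mult[OF less.hyps[OF _ ab(1)] less.hyps[OF _ ab(2)]]) (use fab ab in auto)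
      moreover have "mm n tab (e a) (e b) = (e c :: nat \<Rightarrow> 'a)" using mm_basis[OF ab(1,2), of tab] ab less.prems by auto
      ultimately show ?thesis using fab by simp
    qed
  qed
qed

lemma lower:
  defines "S \<equiv> (e ` {c. 0 < c \<and> c < n \<and> f c = 1} :: (nat \<Rightarrow> 'a::field) set)"
  shows "generates n (mm n tab) (e 0) S \<and> gen_length n (mm n tab) (e 0) S = j"
proof -
  interpret A: alg n "mm n tab :: (nat \<Rightarrow> 'a) \<Rightarrow> _" "e 0" by (rule isalg)
  have Sv: "S \<subseteq> vecs n" by (auto simp: S_def e_vecs)
  have Lj: "Lspan (mm n tab) (e 0) S j = vecs n"
  proof
    show "Lspan (mm n tab) (e 0) S j \<subseteq> vecs n" by (rule A.Lspan_vecs[OF Sv])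
    have "e ` {..<n} \<subseteq> Lspan (mm n tab) (e 0) S j"
    proof (rule image_subsetI)
      fix c assume c: "c \<in> {..<n}"
      have "f c \<le> j" using fpos[of c] f0 c by (cases "c = 0") auto
      then show "e c \<in> Lspan (mm n tab) (e 0) S j"
        using A.word_in_L[OF basis_words[of c]] c by (auto simp: S_def)
    qed
    then show "(vecs n :: (nat \<Rightarrow> 'a) set) \<subseteq> Lspan (mm n tab) (e 0) S j"
      unfolding vecs_span by (rule fv.span_minimal[OF _ A.Lspan_subspace])
  qed
  obtain ct where ct: "ct < n" "f ct = j" using top by auto
  have Lj1: "Lspan (mm n tab) (e 0) S (j - 1) \<subseteq> {x. x ct = 0}"
    unfolding A.Lspan_eq
  proof (rule fv.span_minimal)
    show "fv.subspace {x :: nat \<Rightarrow> 'a. x ct = 0}" by (auto simp: fv.subspace_def sc_def)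
    show "{w. \<exists>k\<le>j - 1. is_word (mm n tab) (e 0) S w k} \<subseteq> {x. x ct = 0}"
    proof safe
      fix w k assume k: "k \<le> j - 1" "is_word (mm n tab) (e 0) S w k"
      then have "w = 0 \<or> (\<exists>c<n. f c = k \<and> w = e c)" using S0_words unfolding S_def by blast
      then show "w ct = 0" using k ct j1 by (auto simp: e_def)
    qed
  qed
  have ectv: "e ct \<in> vecs n" by (rule e_vecs[OF ct(1)])
  have notj1: "Lspan (mm n tab) (e 0) S (j - 1) \<noteq> vecs n"
  proof
    assume "Lspan (mm n tab) (e 0) S (j - 1) = vecs n"
    then have "e ct \<in> {x :: nat \<Rightarrow> 'a. x ct = 0}" using Lj1 ectv by auto
    then show False by (simp add: e_def)
  qed
  have gen: "generates n (mm n tab) (e 0) S" using Sv Lj by (auto simp: generates_def S_def)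
  have "gen_length n (mm n tab) (e 0) S = j"
    unfolding gen_length_def
  proof (rule Least_equality[where P="\<lambda>k. Lspan (mm n tab) (e 0) S k = vecs n", OF Lj])
    fix k assume k: "Lspan (mm n tab) (e 0) S k = vecs n"
    show "j \<le> k"
    proof (rule ccontr)
      assume "\<not> j \<le> k"
      then have "Lspan (mm n tab) (e 0) S k \<subseteq> Lspan (mm n tab) (e 0) S (j - 1)" by (intro A.Lspan_mono) auto
      then show False using k notj1 A.Lspan_vecs[OF Sv, of "j - 1"] by auto
    qed
  qed
  then show ?thesis using gen by simp
qed


lemma upper:
  assumes gen: "generates n (mm n tab) (e 0) T"
  shows "Lspan (mm n tab) (e 0) T j = (vecs n :: (nat \<Rightarrow> 'a::field) set)"
proof -
  interpret A: alg n "mm n tab :: (nat \<Rightarrow> 'a) \<Rightarrow> _" "e 0" by (rule isalg)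
  have Tv: "T \<subseteq> vecs n" and exk: "\<exists>k. Lspan (mm n tab) (e 0) T k = vecs n"
    using gen by (auto simp: generates_def)
  have e0v: "(e 0 :: nat \<Rightarrow> 'a) \<in> vecs n" by (rule e_vecs[OF n0])
  define T' where "T' = (\<lambda>t. t - sc (t 0) (e 0)) ` T"
  have T'G1: "T' \<subseteq> G n f 1"
  proof
    fix s assume "s \<in> T'"
    then obtain t where t: "t \<in> T" "s = t - sc (t 0) (e 0)" by (auto simp: T'_def)
    have tv: "t \<in> vecs n" using t Tv by auto
    have "s \<in> vecs n" using t(2) fv.subspace_diff[OF vecs_subspace tv fv.subspace_scale[OF vecs_subspace e0v]] by simp
    moreover have "\<forall>i<n. f i < 1 \<longrightarrow> s i = 0"
    proof (intro allI impI)
      fix i assume i: "i < n" "f i < 1"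
      then have "i = 0" using fpos[of i] by (cases "i = 0") auto
      then show "s i = 0" using t(2) by (simp add: sc_def e_def)
    qed
    ultimately show "s \<in> G n f 1" by (simp add: G_def)
  qed
  have G1v: "\<And>d. G n f d \<subseteq> (vecs n :: (nat \<Rightarrow> 'a) set)" by (auto simp: G_def)
  have T'v: "T' \<subseteq> vecs n" using T'G1 G1v by blast
  have wT'_L: "\<And>w k. is_word (mm n tab) (e 0) T' w k \<Longrightarrow> w \<in> Lspan (mm n tab) (e 0) T k"
  proof -
    fix w k assume "is_word (mm n tab) (e 0) T' w k"
    then show "w \<in> Lspan (mm n tab) (e 0) T k"
    proof (induct rule: is_word.induct)
      case word_unit then show ?case by (rule A.word_in_L[OF is_word.word_unit]) simp
    next
      case (word_gen s)
      then obtain t where t: "t \<in> T" "s = t - sc (t 0) (e 0)" by (auto simp: T'_def)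
      have "t \<in> Lspan (mm n tab) (e 0) T 1" by (rule A.word_in_L[OF is_word.word_gen[OF t(1)]]) simp
      moreover have "e 0 \<in> Lspan (mm n tab) (e 0) T 1" by (rule A.word_in_L[OF is_word.word_unit]) simp
      ultimately show ?case using t(2) fv.subspace_diff[OF A.Lspan_subspace _ fv.subspace_scale[OF A.Lspan_subspace]] by metis
    next
      case (word_mult a p b q) then show ?case using A.prod_L[OF Tv] by blast
    qed
  qed
  have LT'_LT: "\<And>i. Lspan (mm n tab) (e 0) T' i \<subseteq> Lspan (mm n tab) (e 0) T i"
    unfolding A.Lspan_eq[of T']
  proof (rule fv.span_minimal[OF _ A.Lspan_subspace], safe)
    fix i w k assume "k \<le> i" "is_word (mm n tab) (e 0) T' w k"
    then show "w \<in> Lspan (mm n tab) (e 0) T i" using wT'_L A.Lspan_mono[of k i T] by blast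
  qed
  have wG: "\<And>w k. is_word (mm n tab) (e 0) T' w k \<Longrightarrow> w \<in> G n f k"
  proof -
    fix w k assume "is_word (mm n tab) (e 0) T' w k"
    then show "w \<in> G n f k"
    proof (induct rule: is_word.induct)
      case word_unit then show ?case using e0v by (simp add: G_def)
    next
      case (word_gen s) then show ?case using T'G1 by auto
    next
      case (word_mult a p b q) then show ?case using mm_G[OF fadd] by blast
    qed
  qed
  define W where "W d = fv.span {w. is_word (mm n tab) (e 0) T' w d}" for d
  have WG: "\<And>d. W d \<subseteq> G n f d"
    unfolding W_def by (rule fv.span_minimal[OF _ G_subspace]) (use wG in blast)
  have WL: "\<And>d. W d \<subseteq> Lspan (mm n tab) (e 0) T' d"
    unfolding W_def A.Lspan_eq by (rule fv.span_mono) blast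
  have sT'G1: "fv.span T' \<subseteq> G n f 1" by (rule fv.span_minimal[OF T'G1 G_subspace])
  have sT'W1: "fv.span T' \<subseteq> W 1" unfolding W_def
    by (rule fv.span_mono) (use is_word.word_gen in blast)
  have base: "\<And>c. c < n \<Longrightarrow> f c = 1 \<Longrightarrow> \<exists>x\<in>W 1. \<exists>r\<in>G n f 2. e c = x + r"
  proof -
    fix c assume c: "c < n" "f c = 1"
    define Q where "Q = {x \<in> vecs n. \<exists>\<alpha> s r. s \<in> fv.span T' \<and> r \<in> G n f 2 \<and> x = sc \<alpha> (e 0) + s + r}"
    have Qsub: "fv.subspace Q"
    proof (rule fv.subspaceI)
      show "0 \<in> Q" unfolding Q_def
        by (intro CollectI conjI exI[of _ "0::'a"] exI[of _ "0::nat\<Rightarrow>'a"] exI[of _ "0::nat\<Rightarrow>'a"])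
           (auto simp: A.zero_vecs fv.span_zero fv.subspace_0[OF G_subspace])
    next
      fix x y assume "x \<in> Q" "y \<in> Q"
      then obtain \<alpha> s r \<alpha>' s' r' where
        x: "x \<in> vecs n" "s \<in> fv.span T'" "r \<in> G n f 2" "x = sc \<alpha> (e 0) + s + r" and
        y: "y \<in> vecs n" "s' \<in> fv.span T'" "r' \<in> G n f 2" "y = sc \<alpha>' (e 0) + s' + r'"
        unfolding Q_def by blast
      have "x + y = sc (\<alpha> + \<alpha>') (e 0) + (s + s') + (r + r')"
        using x(4) y(4) by (simp add: fun_eq_iff sc_def algebra_simps)
      moreover have "x + y \<in> vecs n" using x(1) y(1) fv.subspace_add[OF vecs_subspace] by blast
      ultimately show "x + y \<in> Q" unfolding Q_def
        using fv.span_add[OF x(2) y(2)] fv.subspace_add[OF G_subspace x(3) y(3)] by blast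
    next
      fix a x assume "x \<in> Q"
      then obtain \<alpha> s r where
        x: "x \<in> vecs n" "s \<in> fv.span T'" "r \<in> G n f 2" "x = sc \<alpha> (e 0) + s + r"
        unfolding Q_def by blast
      have "sc a x = sc (a * \<alpha>) (e 0) + sc a s + sc a r"
        using x(4) by (simp add: fun_eq_iff sc_def algebra_simps)
      moreover have "sc a x \<in> vecs n" using x(1) fv.subspace_scale[OF vecs_subspace] by blast
      ultimately show "sc a x \<in> Q" unfolding Q_def
        using fv.span_scale[OF x(2)] fv.subspace_scale[OF G_subspace x(3)] by blast
    qed
    have e0Q: "e 0 \<in> Q" unfolding Q_def
      by (intro CollectI conjI exI[of _ "1::'a"] exI[of _ "0::nat\<Rightarrow>'a"] exI[of _ "0::nat\<Rightarrow>'a"])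
         (auto simp: e0v fv.span_zero fv.subspace_0[OF G_subspace])
    have TQ: "\<And>t. t \<in> T \<Longrightarrow> t \<in> Q"
    proof -
      fix t assume t: "t \<in> T"
      have "t - sc (t 0) (e 0) \<in> fv.span T'" by (rule fv.span_base) (use t in \<open>auto simp: T'_def\<close>)
      moreover have "t = sc (t 0) (e 0) + (t - sc (t 0) (e 0)) + 0" by simp
      ultimately show "t \<in> Q" unfolding Q_def using t Tv fv.subspace_0[OF G_subspace] by blast
    qed
    have Qv: "Q \<subseteq> vecs n" by (auto simp: Q_def)
    have QQ: "\<And>x y. x \<in> Q \<Longrightarrow> y \<in> Q \<Longrightarrow> mm n tab x y \<in> Q"
    proof -
      fix x y assume "x \<in> Q" "y \<in> Q"
      then obtain \<alpha> s r \<alpha>' s' r' where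
        x: "x \<in> vecs n" "s \<in> fv.span T'" "r \<in> G n f 2" "x = sc \<alpha> (e 0) + s + r" and
        y: "y \<in> vecs n" "s' \<in> fv.span T'" "r' \<in> G n f 2" "y = sc \<alpha>' (e 0) + s' + r'"
        unfolding Q_def by blast
      define z where "z = s + r"
      define z' where "z' = s' + r'"
      have G21: "G n f 2 \<subseteq> (G n f 1 :: (nat \<Rightarrow> 'a) set)" by (rule G_mono) simp
      have zG: "z \<in> G n f 1" unfolding z_def using sT'G1 x(2) x(3) G21 fv.subspace_add[OF G_subspace] by blast
      have z'G: "z' \<in> G n f 1" unfolding z'_def using sT'G1 y(2) y(3) G21 fv.subspace_add[OF G_subspace] by blast
      have zv: "z \<in> vecs n" "z' \<in> vecs n" using zG z'G G1v by blast+
      have sc0v: "sc \<alpha> (e 0) \<in> vecs n" "sc \<alpha>' (e 0) \<in> vecs n" using fv.subspace_scale[OF vecs_subspace e0v] by blast+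
      have xe: "x = sc \<alpha> (e 0) + z" using x(4) by (simp add: z_def add.assoc)
      have ye: "y = sc \<alpha>' (e 0) + z'" using y(4) by (simp add: z'_def add.assoc)
      have "mm n tab x y = mm n tab (sc \<alpha> (e 0)) y + mm n tab z y"
        using xe A.add_left[OF sc0v(1) zv(1) y(1)] by simp
      also have "mm n tab (sc \<alpha> (e 0)) y = sc \<alpha> y" using A.scale_left[OF e0v y(1)] A.unit_left[OF y(1)] by simp
      also have "mm n tab z y = mm n tab z (sc \<alpha>' (e 0)) + mm n tab z z'"
        using ye A.add_right[OF sc0v(2) zv(2) zv(1)] by simp
      also have "mm n tab z (sc \<alpha>' (e 0)) = sc \<alpha>' z" using A.scale_right[OF zv(1) e0v] A.unit_right[OF zv(1)] by simp
      finally have eq0: "mm n tab x y = sc \<alpha> y + (sc \<alpha>' z + mm n tab z z')" .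
      have alg: "\<And>M. sc \<alpha> (sc \<alpha>' (e 0) + s' + r') + (sc \<alpha>' (s + r) + M) =
          sc (\<alpha> * \<alpha>') (e 0) + (sc \<alpha> s' + sc \<alpha>' s) + (sc \<alpha> r' + sc \<alpha>' r + M)"
        by (simp add: fun_eq_iff sc_def algebra_simps)
      have eq: "mm n tab x y = sc (\<alpha> * \<alpha>') (e 0) + (sc \<alpha> s' + sc \<alpha>' s) + (sc \<alpha> r' + sc \<alpha>' r + mm n tab z z')"
      proof -
        have eq1: "sc \<alpha> y + (sc \<alpha>' z + mm n tab z z') = sc (\<alpha> * \<alpha>') (e 0) + (sc \<alpha> s' + sc \<alpha>' s) + (sc \<alpha> r' + sc \<alpha>' r + mm n tab z z')"
          unfolding y(4) z_def by (rule alg)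
        show ?thesis by (rule trans[OF eq0 eq1])
      qed
      have zz: "mm n tab z z' \<in> G n f 2" using mm_G[OF fadd zG z'G] by (simp add: numeral_2_eq_2)
      have rr: "sc \<alpha> r' + sc \<alpha>' r + mm n tab z z' \<in> G n f 2"
        using fv.subspace_add[OF G_subspace] fv.subspace_scale[OF G_subspace] x(3) y(3) zz by metis
      have ss: "sc \<alpha> s' + sc \<alpha>' s \<in> fv.span T'"
        using fv.span_add fv.span_scale x(2) y(2) by metis
      have "mm n tab x y \<in> vecs n" using A.m_vecs x(1) y(1) by blast
      then show "mm n tab x y \<in> Q" unfolding Q_def using eq rr ss by blast
    qed
    have wQ: "\<And>w k. is_word (mm n tab) (e 0) T w k \<Longrightarrow> w \<in> Q"
    proof -
      fix w k assume "is_word (mm n tab) (e 0) T w k"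
      then show "w \<in> Q"
        by (induct rule: is_word.induct) (use e0Q TQ QQ in auto)
    qed
    obtain k where k: "Lspan (mm n tab) (e 0) T k = vecs n" using exk by blast
    have "Lspan (mm n tab) (e 0) T k \<subseteq> Q"
      unfolding A.Lspan_eq by (rule fv.span_minimal[OF _ Qsub]) (use wQ in blast)
    then have "e c \<in> Q" using k e_vecs[OF c(1)] by auto
    then obtain \<alpha> s r where sr: "s \<in> fv.span T'" "r \<in> G n f 2" "e c = sc \<alpha> (e 0) + s + r"
      unfolding Q_def by blast
    have c0: "c \<noteq> 0" using c f0 by (metis zero_neq_one)
    have "s 0 = 0" using sT'G1 sr(1) n0 f0 by (auto simp: G_def)
    moreover have "r 0 = 0" using sr(2) n0 f0 by (auto simp: G_def)
    moreover have "e c 0 = (0::'a)" using c0 by (simp add: e_def)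
    ultimately have "\<alpha> = 0" using fun_cong[OF sr(3), of 0] by (simp add: sc_def e_def)
    then have "e c = s + r" using sr(3) by (simp add: sc_def zero_fun_def[symmetric])
    then show "\<exists>x\<in>W 1. \<exists>r\<in>G n f 2. e c = x + r" using sT'W1 sr by blast
  qed
  have wT'v: "\<And>d. {w. is_word (mm n tab) (e 0) T' w d} \<subseteq> vecs n" using A.word_vecs[OF _ T'v] by blast
  have step: "\<And>c. c < n \<Longrightarrow> 1 \<le> f c \<Longrightarrow> \<exists>x\<in>W (f c). \<exists>r\<in>G n f (f c + 1). e c = x + r"
  proof -
    fix c show "c < n \<Longrightarrow> 1 \<le> f c \<Longrightarrow> \<exists>x\<in>W (f c). \<exists>r\<in>G n f (f c + 1). e c = x + r"
    proof (induct "f c" arbitrary: c rule: less_induct)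
      case less
      show ?case
      proof (cases "f c = 1")
        case True then show ?thesis using base[OF less.prems(1) True] by (simp add: numeral_2_eq_2)
      next
        case False
        then have f2: "2 \<le> f c" using less.prems by auto
        then have c0: "0 < c" using f0 by (cases c) auto
        obtain a b where ab: "a < n" "b < n" "tab a b = c" "1 \<le> f a" "1 \<le> f b"
          using spl[OF c0 less.prems(1) f2] by blast
        have fab: "f c = f a + f b" using fadd[OF ab(1,2)] ab(3) less.prems by auto
        obtain x r where xr: "x \<in> W (f a)" "r \<in> G n f (f a + 1)" "e a = x + r"
          using less.hyps[of a] ab fab by auto
        obtain y r' where yr: "y \<in> W (f b)" "r' \<in> G n f (f b + 1)" "e b = y + r'"
          using less.hyps[of b] ab fab by auto
        have xG: "x \<in> G n f (f a)" and yG: "y \<in> G n f (f b)" using xr yr WG by blast+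
        have xv: "x \<in> vecs n" "y \<in> vecs n" "r \<in> vecs n" "r' \<in> vecs n" using xG yG xr yr G1v by blast+
        have "(e c :: nat \<Rightarrow> 'a) = mm n tab (e a) (e b)" using mm_basis[OF ab(1,2), of tab, where 'a='a] ab less.prems by simp
        also have "\<dots> = mm n tab (x + r) (y + r')" using xr yr by simp
        also have "\<dots> = mm n tab x y + (mm n tab x r' + mm n tab r y + mm n tab r r')"
        proof -
          have yv: "y + r' \<in> vecs n" using xv fv.subspace_add[OF vecs_subspace] by blast
          have "mm n tab (x + r) (y + r') = mm n tab x (y + r') + mm n tab r (y + r')"
            by (rule A.add_left[OF xv(1) xv(3) yv])
          also have "\<dots> = (mm n tab x y + mm n tab x r') + (mm n tab r y + mm n tab r r')"
            using A.add_right[OF xv(2) xv(4) xv(1)] A.add_right[OF xv(2) xv(4) xv(3)] by simp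
          finally show ?thesis by (simp add: algebra_simps)
        qed
        finally have ec: "e c = mm n tab x y + (mm n tab x r' + mm n tab r y + mm n tab r r')" .
        have "mm n tab x y \<in> W (f a + f b)"
        proof (rule A.span_both[OF xr(1)[unfolded W_def] wT'v yr(1)[unfolded W_def] wT'v])
          show "fv.subspace (W (f a + f b))" by (simp add: W_def)
          fix x0 y0 assume "x0 \<in> {w. is_word (mm n tab) (e 0) T' w (f a)}" "y0 \<in> {w. is_word (mm n tab) (e 0) T' w (f b)}"
          then have "is_word (mm n tab) (e 0) T' (mm n tab x0 y0) (f a + f b)"
            using ab by (intro is_word.word_mult) auto
          then show "mm n tab x0 y0 \<in> W (f a + f b)" unfolding W_def by (intro fv.span_base) auto
        qed
        moreover have "mm n tab x r' + mm n tab r y + mm n tab r r' \<in> G n f (f c + 1)"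
        proof -
          have 1: "mm n tab x r' \<in> G n f (f c + 1)" using mm_G[OF fadd xG yr(2)] fab by (simp add: add.assoc)
          have 2: "mm n tab r y \<in> G n f (f c + 1)" using mm_G[OF fadd xr(2) yG] fab by (simp add: ac_simps)
          have "mm n tab r r' \<in> G n f (f a + 1 + (f b + 1))" using mm_G[OF fadd xr(2) yr(2)] .
          then have 3: "mm n tab r r' \<in> G n f (f c + 1)" using G_mono[of "f c + 1" "f a + 1 + (f b + 1)" n f] fab by auto
          show ?thesis using 1 2 3 fv.subspace_add[OF G_subspace] by metis
        qed
        ultimately show ?thesis using ec fab by auto
      qed
    qed
  qed
  define L' where "L' = Lspan (mm n tab) (e 0) T' j"
  have L'sub: "fv.subspace L'" unfolding L'_def by (rule A.Lspan_subspace)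
  have allc: "\<And>c. c < n \<Longrightarrow> (e c :: nat \<Rightarrow> 'a) \<in> L'"
  proof -
    fix c show "c < n \<Longrightarrow> (e c :: nat \<Rightarrow> 'a) \<in> L'"
    proof (induct "j - f c" arbitrary: c rule: less_induct)
      case less
      show ?case
      proof (cases "c = 0")
        case True
        have "e 0 \<in> Lspan (mm n tab) (e 0) T' j" by (rule A.word_in_L[OF is_word.word_unit]) simp
        then show ?thesis unfolding L'_def using True by simp
      next
        case False
        then have fc: "1 \<le> f c" "f c \<le> j" using fpos less.prems by auto
        obtain x r where xr: "x \<in> W (f c)" "r \<in> G n f (f c + 1)" "e c = x + r"
          using step[OF less.prems fc(1)] by blast
        have "x \<in> L'" using xr(1) WL A.Lspan_mono[of "f c" j T'] fc unfolding L'_def by blast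
        moreover have "r \<in> L'"
        proof -
          have rv: "r \<in> vecs n" using xr(2) G1v by blast
          have "(\<Sum>k<n. sc (r k) (e k)) \<in> L'"
          proof (rule fv.subspace_sum[OF L'sub])
            fix k assume k: "k \<in> {..<n}"
            show "sc (r k) (e k) \<in> L'"
            proof (cases "f k < f c + 1")
              case True
              then have "r k = 0" using xr(2) k by (auto simp: G_def)
              then show ?thesis using fv.subspace_0[OF L'sub] by (simp add: sc_def zero_fun_def[symmetric])
            next
              case False
              have "k \<noteq> 0"
              proof
                assume "k = 0" then show False using False f0 by simp
              qed
              then have "f k \<le> j" using fpos k by auto
              then have "j - f k < j - f c" using False fc by auto
              then have "e k \<in> L'" using less.hyps k by auto
              then show ?thesis by (rule fv.subspace_scale[OF L'sub])
            qed
          qed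
          then show ?thesis using vecs_decomp[OF rv] by simp
        qed
        ultimately show ?thesis using xr(3) fv.subspace_add[OF L'sub] by simp
      qed
    qed
  qed
  have "vecs n \<subseteq> L'"
    unfolding vecs_span by (rule fv.span_minimal[OF _ L'sub]) (use allc in blast)
  moreover have "L' \<subseteq> Lspan (mm n tab) (e 0) T j" unfolding L'_def by (rule LT'_LT)
  ultimately show ?thesis using A.Lspan_vecs[OF Tv] by blast
qed


lemma has_len: "alg_has_length n (mm n tab :: (nat \<Rightarrow> 'a::field) \<Rightarrow> _) (e 0) j"
  unfolding alg_has_length_def
proof (intro conjI allI impI)
  show "\<exists>S. generates n (mm n tab :: (nat \<Rightarrow> 'a) \<Rightarrow> _) (e 0) S \<and> gen_length n (mm n tab) (e 0) S = j"
    using lower by blast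
  fix S :: "(nat \<Rightarrow> 'a) set" assume "generates n (mm n tab) (e 0) S"
  then have "Lspan (mm n tab) (e 0) S j = vecs n" by (rule upper)
  then show "gen_length n (mm n tab) (e 0) S \<le> j" unfolding gen_length_def by (rule Least_le)
qed

end


lemma AC_alg:
  assumes "AC N j"
  shows "\<exists>(m :: (nat \<Rightarrow> 'a::field) \<Rightarrow> (nat \<Rightarrow> 'a) \<Rightarrow> (nat \<Rightarrow> 'a)) u. is_algebra N m u \<and> alg_has_length N m u j"
proof -
  obtain D where D: "finite D" "1 \<in> D" "j \<in> D" "\<forall>i\<in>D. 1 \<le> i \<and> i \<le> j" "card D + 1 \<le> N"
    "\<forall>i\<in>D. 1 < i \<longrightarrow> (\<exists>p\<in>D. \<exists>q\<in>D. p + q = i)"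
    using assms unfolding AC_def by blast
  define r where "r = card D"
  obtain g where g: "bij_betw g {1..r} D" using ex_bij_betw_nat_finite_1[OF D(1)] by (auto simp: r_def)
  have ginj: "inj_on g {1..r}" and gim: "g ` {1..r} = D" using g by (auto simp: bij_betw_def)
  define h where "h = the_inv_into {1..r} g"
  have hD: "\<And>d. d \<in> D \<Longrightarrow> h d \<in> {1..r} \<and> g (h d) = d"
    unfolding h_def using ginj gim the_inv_into_into[OF ginj] f_the_inv_into_f[OF ginj] by blast
  have hg: "\<And>i. i \<in> {1..r} \<Longrightarrow> h (g i) = i" unfolding h_def by (rule the_inv_into_f_f[OF ginj])
  have gD: "\<And>i. i \<in> {1..r} \<Longrightarrow> g i \<in> D" using gim by auto
  define f where "f i = (if i = 0 then 0 else if i \<le> r then g i else 1)" for i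
  define tab where "tab a b = (if a = 0 then b else if b = 0 then a
      else if a \<le> r \<and> b \<le> r \<and> g a + g b \<in> D then h (g a + g b) else N)" for a b
  have rN: "r < N" using D(5) by (simp add: r_def)
  have j1: "1 \<le> j" using D(3,4) by auto
  interpret gr N tab f j
  proof
    show "0 < N" using rN by simp
    show "1 \<le> j" by (rule j1)
    show "\<And>b. b < N \<Longrightarrow> tab 0 b = b" by (simp add: tab_def)
    show "\<And>a. a < N \<Longrightarrow> tab a 0 = a" by (simp add: tab_def)
    show "f 0 = 0" by (simp add: f_def)
    show "\<And>i. 0 < i \<Longrightarrow> i < N \<Longrightarrow> 1 \<le> f i \<and> f i \<le> j"
      using gD D(4) j1 by (auto simp: f_def)
    show "\<And>a b. a < N \<Longrightarrow> b < N \<Longrightarrow> tab a b < N \<Longrightarrow> f (tab a b) = f a + f b"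
    proof -
      fix a b assume ab: "a < N" "b < N" "tab a b < N"
      show "f (tab a b) = f a + f b"
      proof (cases "a = 0 \<or> b = 0")
        case True then show ?thesis by (auto simp: tab_def f_def)
      next
        case False
        then have c: "a \<le> r \<and> b \<le> r \<and> g a + g b \<in> D" using ab(3) by (auto simp: tab_def split: if_splits)
        then have "tab a b = h (g a + g b)" using False by (simp add: tab_def)
        moreover have "h (g a + g b) \<in> {1..r}" "g (h (g a + g b)) = g a + g b" using hD c by auto
        ultimately show ?thesis using False c by (auto simp: f_def)
      qed
    qed
    show "\<And>c. 0 < c \<Longrightarrow> c < N \<Longrightarrow> 2 \<le> f c \<Longrightarrow> \<exists>a<N. \<exists>b<N. tab a b = c \<and> 1 \<le> f a \<and> 1 \<le> f b"
    proof -
      fix c assume c: "0 < c" "c < N" "2 \<le> f c"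
      then have cr: "c \<le> r" by (auto simp: f_def split: if_splits)
      then have fc: "f c = g c" "g c \<in> D" using c gD by (auto simp: f_def)
      then obtain p q where pq: "p \<in> D" "q \<in> D" "p + q = g c" using D(6) c(3) by force
      define a where "a = h p"
      define b where "b = h q"
      have a: "a \<in> {1..r}" "g a = p" using hD pq by (auto simp: a_def)
      have b: "b \<in> {1..r}" "g b = q" using hD pq by (auto simp: b_def)
      have "tab a b = h (g c)" using a b pq fc by (auto simp: tab_def)
      also have "\<dots> = c" using hg c cr by auto
      finally have "tab a b = c" .
      moreover have "1 \<le> f a" "1 \<le> f b" using a b pq D(4) by (auto simp: f_def)
      moreover have "a < N" "b < N" using a b rN by auto
      ultimately show "\<exists>a<N. \<exists>b<N. tab a b = c \<and> 1 \<le> f a \<and> 1 \<le> f b" by blast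
    qed
    show "\<exists>c<N. f c = j"
      using hD[OF D(3)] rN by (intro exI[of _ "h j"]) (auto simp: f_def)
  qed
  show ?thesis using has_len mm_alg[OF n0 t0 t1] by blast
qed


lemma alg_AC:
  assumes "is_algebra N m u" "alg_has_length N m u j" "1 \<le> j"
  shows "AC N j"
proof -
  obtain S where "generates N m u S" "gen_length N m u S = j"
    using assms(2) unfolding alg_has_length_def by blast
  then show ?thesis using alg.length_AC[OF alg.intro[OF assms(1)]] assms(3) by blast
qed

theorem proposition4p10:
  fixes n :: nat
  assumes "2 \<le> n"
  shows "B TYPE('a::field) (n + 2) \<ge> 2 * B TYPE('a) n + 1"
proof -
  define P where "P N l = (0 < l \<and> (\<forall>j\<in>{1..l}. \<exists>(m :: (nat \<Rightarrow> 'a) \<Rightarrow> (nat \<Rightarrow> 'a) \<Rightarrow> (nat \<Rightarrow> 'a)) u.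
        is_algebra N m u \<and> alg_has_length N m u j))" for N l
  have Bdef: "\<And>N. B TYPE('a) N = (GREATEST l. P N l)" by (simp add: B_def P_def)
  have bnd: "\<And>N l. P N l \<Longrightarrow> l \<le> 2 ^ N"
  proof -
    fix N l assume "P N l"
    then obtain m :: "(nat \<Rightarrow> 'a) \<Rightarrow> (nat \<Rightarrow> 'a) \<Rightarrow> (nat \<Rightarrow> 'a)" and u where "is_algebra N m u" "alg_has_length N m u l" "1 \<le> l"
      unfolding P_def by fastforce
    then show "l \<le> 2 ^ N" using alg_AC AC_bound by blast
  qed
  have P1: "P n 1" unfolding P_def using AC_alg[OF AC_one[OF assms]] by auto
  define b where "b = B TYPE('a) n"
  have Pb: "P n b" unfolding b_def Bdef by (rule GreatestI_nat[where P="P n", OF P1 bnd])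
  have P2: "P (n + 2) (2 * b + 1)"
    unfolding P_def
  proof (intro conjI ballI)
    show "0 < 2 * b + 1" by simp
    fix j assume j: "j \<in> {1..2 * b + 1}"
    show "\<exists>(m :: (nat \<Rightarrow> 'a) \<Rightarrow> (nat \<Rightarrow> 'a) \<Rightarrow> (nat \<Rightarrow> 'a)) u. is_algebra (n + 2) m u \<and> alg_has_length (n + 2) m u j"
    proof (cases "j = 1")
      case True then show ?thesis using AC_alg[OF AC_one[of "n + 2"]] by auto
    next
      case False
      define k where "k = j div 2"
      have k: "1 \<le> k" "k \<le> b" using j False by (auto simp: k_def)
      then obtain m :: "(nat \<Rightarrow> 'a) \<Rightarrow> (nat \<Rightarrow> 'a) \<Rightarrow> (nat \<Rightarrow> 'a)" and u where "is_algebra n m u" "alg_has_length n m u k"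
        using Pb unfolding P_def by fastforce
      then have ACk: "AC n k" using alg_AC k by blast
      have "j = 2 * k \<or> j = 2 * k + 1" unfolding k_def by presburger
      then have "AC (n + 2) j" using AC_ext[OF ACk k(1)] by blast
      then show ?thesis by (rule AC_alg)
    qed
  qed
  have "2 * b + 1 \<le> (GREATEST l. P (n + 2) l)" by (rule Greatest_le_nat[where P="P (n + 2)", OF P2 bnd])
  then show ?thesis unfolding b_def Bdef by simp
qed

end
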